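(* Let $\sigma^*$ be a function on $V$ with $0<\sigma^*_{\min}\le\sigma^*({\bf r})\le\sigma^*_{\max}$ for all ${\bf r}\in V$. Then the operator $\mathcal{K}\sigma^*$ (multiplication by $\sigma^*$ followed by $\mathcal{K}$), acting on $L^2(V)$ equipped with the weighted norm $\|\cdot\|_{L^2(V,\sigma)}$, satisfies $$\|\mathcal{K}\sigma^*\|_{L^2(V,\sigma)}\le\Big\|\frac{\sigma^*}{\sigma}\Big\|_{L^\infty(V)}.$$
   Context: Setting: $V\subset\mathbb{R}^3$ is a bounded convex domain, and $\mathbb{S}^2$ is the unit sphere in $\mathbb{R}^3$. The scattering and absorption cross-sections $\sigma_S,\sigma_A$ are functions on $V$ satisfying $0<(\sigma_S)_{\min}\le\sigma_S({\bf r})\le(\sigma_S)_{\max}$ and $0<(\sigma_A)_{\min}\le\sigma_A({\bf r})\le(\sigma_A)_{\max}$ for all ${\bf r}\in V$, and the total cross-section is $\sigma=\sigma_S+\sigma_A$, so $0<\sigma_{\min}\le\sigma({\bf r})\le\sigma_{\max}$. The optical path length is $\tau({\bf r},{\bf r}')=\int_{l({\bf r},{\bf r}')}\sigma({\bf z})\,\mathrm{d}{\bf z}$, the integral of $\sigma$ along the line segment $l({\bf r},{\bf r}')$ joining ${\bf r}$ and ${\bf r}'$. The integral operator $\mathcal{K}$ is $(\mathcal{K}v)({\bf r})=\int_V k({\bf r},{\bf r}')v({\bf r}')\,\mathrm{d}{\bf r}'$ with kernel $k({\bf r},{\bf r}')=\dfrac{\exp(-\tau({\bf r},{\bf r}'))}{4\pi\|{\bf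 r}-{\bf r}'\|_2^2}$. For a weight $w$ bounded above and below by positive constants, $\|v\|_{L^2(V,w)}^2=\int_V|v({\bf r})|^2w({\bf r})\,\mathrm{d}{\bf r}$; the operator norm on the left is with respect to this norm with $w=\sigma$. *)

theory Defs
  imports "HOL-Analysis.Analysis" "HOL-Probability.Essential_Supremum"
begin

definition optical_path :: "(real^3 \<Rightarrow> real) \<Rightarrow> real^3 \<Rightarrow> real^3 \<Rightarrow> real" where
  "optical_path \<sigma> r r' = (LBINT t=0..1. \<sigma> (r + t *\<^sub>R (r' - r)) * norm (r' - r))"

definition kern :: "(real^3 \<Rightarrow> real) \<Rightarrow> real^3 \<Rightarrow> real^3 \<Rightarrow> real" where
  "kern \<sigma> r r' = exp (- optical_path \<sigma> r r') / (4 * pi * (norm (r - r'))\<^sup>2)"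

definition Kop :: "(real^3 \<Rightarrow> real) \<Rightarrow> (real^3) set \<Rightarrow> (real^3 \<Rightarrow> real) \<Rightarrow> real^3 \<Rightarrow> real" where
  "Kop \<sigma> V v r = (LINT r':V|lebesgue. kern \<sigma> r r' * v r')"

definition L2w_sq :: "(real^3) set \<Rightarrow> (real^3 \<Rightarrow> real) \<Rightarrow> (real^3 \<Rightarrow> real) \<Rightarrow> ennreal" where
  "L2w_sq V w v = (\<integral>\<^sup>+ r. indicator V r * ennreal ((v r)\<^sup>2 * w r) \<partial>lebesgue)"

definition Linf_norm :: "(real^3) set \<Rightarrow> (real^3 \<Rightarrow> real) \<Rightarrow> ereal" where
  "Linf_norm V f = esssup (restrict_space lebesgue V) (\<lambda>r. ereal \<bar>f r\<bar>)"

end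

theory Submission
  imports Defs
begin

lemma exp_neg_quad: fixes d::real assumes "0 \<le> d" shows "exp (-d) \<le> 1 - d + d^2/2"
proof -
  let ?f = "\<lambda>x::real. 1 - x + x^2/2 - exp (-x)"
  have "?f 0 \<le> ?f d"
  proof (rule DERIV_nonneg_imp_nondecreasing[OF assms])
    fix x assume "0 \<le> x" "x \<le> d"
    have "DERIV ?f x :> (-1 + x + exp (-x))"
      by (rule derivative_eq_intros refl | simp)+
    moreover have "0 \<le> -1 + x + exp (-x)" using exp_ge_add_one_self[of "-x"] by linarith
    ultimately show "\<exists>y. DERIV ?f x :> y \<and> 0 \<le> y" by blast
  qed
  then show ?thesis by simp
qed

lemma oneD:
  fixes g :: "real \<Rightarrow> real" and M :: real
  assumes gm[measurable]: "g \<in> borel_measurable borel"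
    and g0: "\<And>x. 0 \<le> g x" and gM: "\<And>x. g x \<le> M"
  shows "(\<integral>\<^sup>+ l. indicator {0<..} l * ennreal (g l * exp (- (LINT u:{0..l}|lborel. g u))) \<partial>lborel) \<le> 1"
proof -
  define G where "G = (\<lambda>x. LINT u:{0..x}|lborel. g u)"
  have M0: "0 \<le> M" using g0[of 0] gM[of 0] by linarith
  have si: "set_integrable lborel {a..b} g" for a b
    unfolding set_integrable_def
    by (rule integrableI_bounded_set_indicator[where B=M]) (auto simp: g0 gM abs_of_nonneg emeasure_lborel_Icc_eq)
  have gint: "g integrable_on {a..b}" for a b
    using set_borel_integral_eq_integral(1)[OF si] .
  have Geq: "G x = integral {0..x} g" for x
    unfolding G_def using set_borel_integral_eq_integral(2)[OF si] .
  have Gm[measurable]: "G \<in> borel_measurable borel"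
  proof -
    have "(\<lambda>x. \<integral>u. (\<lambda>p. if 0 \<le> snd p \<and> snd p \<le> fst p then g (snd p) else 0) (x, u) \<partial>lborel) \<in> borel_measurable borel"
      by (rule lborel.borel_measurable_lebesgue_integral) measurable
    moreover have "G = (\<lambda>x. \<integral>u. (\<lambda>p. if 0 \<le> snd p \<and> snd p \<le> fst p then g (snd p) else 0) (x, u) \<partial>lborel)"
      unfolding G_def set_lebesgue_integral_def
      by (intro ext Bochner_Integration.integral_cong) (auto simp: indicator_def)
    ultimately show ?thesis by simp
  qed
  have G0: "0 \<le> G x" for x
    unfolding Geq by (rule Henstock_Kurzweil_Integration.integral_nonneg[OF gint]) (simp add: g0)
  define h where "h = (\<lambda>u. g u * exp (- G u))"
  have hm[measurable]: "h \<in> borel_measurable borel" unfolding h_def by measurable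
  have h0: "0 \<le> h u" for u unfolding h_def by (simp add: g0)
  have hM: "h u \<le> M" for u
  proof -
    have "h u \<le> g u * 1" unfolding h_def using G0[of u] g0[of u]
      by (intro mult_left_mono) auto
    then show ?thesis using gM[of u] by simp
  qed
  have hsi: "set_integrable lborel {a..b} h" for a b
    unfolding set_integrable_def
    by (rule integrableI_bounded_set_indicator[where B=M]) (auto simp: h0 hM abs_of_nonneg emeasure_lborel_Icc_eq)
  have hint: "h integrable_on {a..b}" for a b
    using set_borel_integral_eq_integral(1)[OF hsi] .
  have Gcomb: "G t = G s + integral {s..t} g" if "0 \<le> s" "s \<le> t" for s t
    unfolding Geq using Henstock_Kurzweil_Integration.integral_combine[OF that gint] by simp
  have gbd: "integral {s..t} g \<le> M * (t - s)" if "s \<le> t" for s t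
  proof -
    have "integral {s..t} g \<le> integral {s..t} (\<lambda>x. M)"
      by (rule integral_le[OF gint]) (auto simp: gM)
    then show ?thesis using that by (simp add: mult.commute)
  qed
  have gnn: "0 \<le> integral {s..t} g" for s t
    by (rule Henstock_Kurzweil_Integration.integral_nonneg[OF gint]) (simp add: g0)
  have hbd: "integral {s..t} h \<le> integral {s..t} g * exp (- G s)" if "0 \<le> s" "s \<le> t" for s t
  proof -
    have "integral {s..t} h \<le> integral {s..t} (\<lambda>u. g u * exp (- G s))"
    proof (rule integral_le[OF hint])
      show "(\<lambda>u. g u * exp (- G s)) integrable_on {s..t}"
        by (rule integrable_on_mult_left[OF gint])
      fix u assume u: "u \<in> {s..t}"
      have "G s \<le> G u" using Gcomb[of s u] gnn[of s u] u that by auto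
      then show "h u \<le> g u * exp (- G s)" unfolding h_def
        by (intro mult_left_mono) (auto simp: g0)
    qed
    then show ?thesis by simp
  qed
  have main: "integral {0..L} h \<le> 1" if L0: "0 \<le> L" for L
  proof -
    have bnd: "integral {0..L} h \<le> 1 + M^2 * L^2 / (2 * real N)" if N0: "0 < N" for N :: nat
    proof -
      define d where "d = L / real N"
      have d0: "0 \<le> d" unfolding d_def using L0 by simp
      have ind: "integral {0..real i * d} h + exp (- G (real i * d)) \<le> 1 + real i * (M * d)^2 / 2" for i :: nat
      proof (induction i)
        case 0
        then show ?case by (simp add: Geq)
      next
        case (Suc i)
        define s where "s = real i * d"
        define t where "t = real (Suc i) * d"
        have s0: "0 \<le> s" unfolding s_def using d0 by simp
        have st: "t = s + d" unfolding s_def t_def by (simp add: algebra_simps)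
        define \<delta> where "\<delta> = integral {s..t} g"
        have \<delta>0: "0 \<le> \<delta>" unfolding \<delta>_def by (rule gnn)
        have \<delta>M: "\<delta> \<le> M * d" unfolding \<delta>_def using gbd[of s t] st d0 by simp
        have Gt: "G t = G s + \<delta>" unfolding \<delta>_def using Gcomb[of s t] s0 st d0 by simp
        have comb: "integral {0..t} h = integral {0..s} h + integral {s..t} h"
          using Henstock_Kurzweil_Integration.integral_combine[OF s0 _ hint, of t] st d0 by simp
        have e1: "exp (- G s) \<le> 1" using G0[of s] by simp
        have e0: "0 \<le> exp (- G s)" by simp
        have "exp (- G t) = exp (- G s) * exp (- \<delta>)" using Gt by (simp add: exp_add[symmetric])
        also have "\<dots> \<le> exp (- G s) * (1 - \<delta> + \<delta>^2/2)"
          by (rule mult_left_mono[OF exp_neg_quad[OF \<delta>0] e0])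
        finally have et: "exp (- G t) \<le> exp (- G s) * (1 - \<delta> + \<delta>^2/2)" .
        have hb: "integral {s..t} h \<le> \<delta> * exp (- G s)" unfolding \<delta>_def using hbd[of s t] s0 st d0 by simp
        have "integral {0..t} h + exp (- G t) \<le> integral {0..s} h + \<delta> * exp (- G s) + exp (- G s) * (1 - \<delta> + \<delta>^2/2)"
          using comb hb et by linarith
        also have "\<dots> = integral {0..s} h + exp (- G s) + exp (- G s) * (\<delta>^2/2)"
          by (simp add: algebra_simps)
        also have "\<dots> \<le> integral {0..s} h + exp (- G s) + 1 * ((M*d)^2/2)"
        proof -
          have "\<delta>^2 \<le> (M*d)^2" using \<delta>0 \<delta>M by (intro power_mono) auto
          then have "exp (- G s) * (\<delta>^2/2) \<le> 1 * ((M*d)^2/2)"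
            using e1 e0 by (intro mult_mono) auto
          then show ?thesis by linarith
        qed
        also have "\<dots> \<le> 1 + real (Suc i) * (M * d)^2 / 2"
        proof -
          have "real (Suc i) * (M * d)^2 / 2 = real i * (M*d)^2/2 + (M*d)^2/2"
            by (simp add: field_simps)
          then show ?thesis using Suc.IH unfolding s_def by linarith
        qed
        finally show ?case unfolding t_def .
      qed
      have "real N * d = L" unfolding d_def using N0 by simp
      with ind[of N] have "integral {0..L} h \<le> 1 + real N * (M * d)^2 / 2"
        by (smt (verit) exp_gt_zero)
      also have "real N * (M * d)^2 / 2 = M^2 * L^2 / (2 * real N)"
        unfolding d_def using N0 by (simp add: field_simps power2_eq_square)
      finally show ?thesis .
    qed
    show ?thesis
    proof (rule ccontr)
      assume "\<not> integral {0..L} h \<le> 1"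
      then have pos: "0 < integral {0..L} h - 1" by simp
      obtain N :: nat where N: "M^2 * L^2 / (integral {0..L} h - 1) < real N"
        using reals_Archimedean2 by blast
      have N0: "0 < N" using N pos
        by (metis divide_nonneg_pos less_le_trans not_gr0 of_nat_0 zero_le_power2 mult_nonneg_nonneg not_less)
      have "M^2 * L^2 < real N * (integral {0..L} h - 1)"
        using N pos by (simp add: divide_less_eq mult.commute)
      then have lt: "M^2 * L^2 / (2 * real N) < (integral {0..L} h - 1) / 2"
        using N0 by (simp add: field_simps)
      show False
      proof -
        have gen: "\<And>x a::real. x \<le> 1 + a \<Longrightarrow> a < (x-1)/2 \<Longrightarrow> 0 < x - 1 \<Longrightarrow> False" by (simp add: field_simps)
        show False by (rule gen[OF bnd[OF N0] lt pos])
      qed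
    qed
  qed
  have "(\<integral>\<^sup>+ l. indicator {0<..} l * ennreal (h l) \<partial>lborel) \<le> (\<integral>\<^sup>+ l. (SUP n. ennreal (h l) * indicator {0..real n} l) \<partial>lborel)"
  proof (rule nn_integral_mono)
    fix l :: real
    show "indicator {0<..} l * ennreal (h l) \<le> (SUP n. ennreal (h l) * indicator {0..real n} l)"
    proof (cases "0 < l")
      case True
      obtain n :: nat where "l \<le> real n" using real_arch_simple by blast
      then have "indicator {0<..} l * ennreal (h l) = ennreal (h l) * indicator {0..real n} l"
        using True by (simp add: indicator_def)
      then show ?thesis by (metis SUP_upper2 UNIV_I order_refl)
    qed (simp add: indicator_def)
  qed
  also have "\<dots> = (SUP n. \<integral>\<^sup>+ l. ennreal (h l) * indicator {0..real n} l \<partial>lborel)"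
    by (rule nn_integral_monotone_convergence_SUP)
       (auto simp: incseq_def le_fun_def indicator_def intro!: mult_left_mono)
  also have "\<dots> \<le> 1"
  proof (rule SUP_least)
    fix n :: nat
    have "(h has_integral integral {0..real n} h) {0..real n}" using hint by blast
    then have "(\<integral>\<^sup>+ l. ennreal (h l) * indicator {0..real n} l \<partial>lborel) = ennreal (integral {0..real n} h)"
      by (rule nn_integral_has_integral_lebesgue'[rotated]) (simp add: h0)
    also have "\<dots> \<le> 1" using main[of "real n"] by simp
    finally show "(\<integral>\<^sup>+ l. ennreal (h l) * indicator {0..real n} l \<partial>lborel) \<le> 1" .
  qed
  finally show ?thesis unfolding h_def G_def .
qed

lemma inner_ln:
  fixes x :: "real^3" assumes x: "x \<noteq> 0"
  shows "(\<integral>\<^sup>+ l. indicator {0<..} l * ennreal (1/l) * indicator {y::real^3. 1 \<le> norm y \<and> norm y \<le> exp 1} ((1/l) *\<^sub>R x) \<partial>lborel) = 1"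
proof -
  define n where "n = norm x"
  have n0: "0 < n" unfolding n_def using x by simp
  have eq: "indicator {0<..} l * ennreal (1/l) * indicator {y::real^3. 1 \<le> norm y \<and> norm y \<le> exp 1} ((1/l) *\<^sub>R x)
      = ennreal (1/l) * indicator {n / exp 1 .. n} l" for l :: real
  proof (cases "0 < l")
    case True
    have "(1 \<le> norm ((1/l) *\<^sub>R x) \<and> norm ((1/l) *\<^sub>R x) \<le> exp 1) \<longleftrightarrow> (n / exp 1 \<le> l \<and> l \<le> n)"
      using True n0 by (auto simp: n_def[symmetric] field_simps)
    then show ?thesis using True by (simp add: indicator_def)
  next
    case False
    have "\<not> (n / exp 1 \<le> l)" using False n0 by (simp add: not_le) (smt (verit) divide_pos_pos exp_gt_zero)
    then show ?thesis using False by (simp add: indicator_def)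
  qed
  have d: "((\<lambda>l. 1/l) has_integral (ln n - ln (n / exp 1))) {n / exp 1 .. n}"
  proof (rule fundamental_theorem_of_calculus)
    show "n / exp 1 \<le> n" using n0 by (simp add: divide_le_eq)
    fix l assume "l \<in> {n / exp 1 .. n}"
    then have "0 < l" using n0 by (smt (verit) atLeastAtMost_iff divide_pos_pos exp_gt_zero)
    then show "(ln has_vector_derivative 1 / l) (at l within {n / exp 1 .. n})"
      by (auto intro!: derivative_eq_intros simp: has_real_derivative_iff_has_vector_derivative[symmetric])
  qed
  have "ln n - ln (n / exp 1) = 1" using n0 by (simp add: ln_div)
  with d have d': "((\<lambda>l. 1/l) has_integral 1) {n / exp 1 .. n}" by simp
  have "(\<integral>\<^sup>+ l. ennreal (1/l) * indicator {n / exp 1 .. n} l \<partial>lborel) = ennreal 1"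
    by (rule nn_integral_has_integral_lebesgue'[OF _ d'])
       (smt (verit) atLeastAtMost_iff divide_pos_pos exp_gt_zero n0 divide_nonneg_pos)
  then show ?thesis by (simp add: eq)
qed

definition shellA :: "(real^3) set" where "shellA = {y::real^3. 1 \<le> norm y \<and> norm y \<le> exp 1}"

lemma shellA_borel[measurable]: "shellA \<in> sets borel"
proof -
  have "closed shellA" unfolding shellA_def
    by (intro closed_Collect_conj closed_Collect_le) (auto intro!: continuous_intros)
  then show ?thesis by simp
qed

lemma zero_notin_shellA: "0 \<notin> shellA" unfolding shellA_def by simp

lemma scale_nn:
  fixes F :: "real^3 \<Rightarrow> ennreal" assumes [measurable]: "F \<in> borel_measurable borel" and l: "0 < l"
  shows "(\<integral>\<^sup>+ x. F x \<partial>lborel) = ennreal (l^3) * (\<integral>\<^sup>+ y. F (l *\<^sub>R y) \<partial>lborel)"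
proof -
  have eq: "(lborel::(real^3) measure) = density (distr lborel borel (\<lambda>x. 0 + l *\<^sub>R x)) (\<lambda>_. \<bar>l\<bar>^DIM(real^3))"
    by (rule lborel_affine) (use l in simp)
  have "(\<integral>\<^sup>+ x. F x \<partial>lborel) = (\<integral>\<^sup>+ x. F x \<partial>density (distr lborel borel (\<lambda>x. 0 + l *\<^sub>R x)) (\<lambda>_. \<bar>l\<bar>^DIM(real^3)))"
    by (rule arg_cong[where f="\<lambda>M. integral\<^sup>N M F", OF eq])
  also have "\<dots> = (\<integral>\<^sup>+ y. ennreal (l^3) * F (l *\<^sub>R y) \<partial>lborel)"
    using l by (simp add: nn_integral_density nn_integral_distr)
  also have "\<dots> = ennreal (l^3) * (\<integral>\<^sup>+ y. F (l *\<^sub>R y) \<partial>lborel)"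
    by (rule nn_integral_cmult) measurable
  finally show ?thesis .
qed

lemma scaling_id:
  fixes f :: "real^3 \<Rightarrow> ennreal"
  assumes f[measurable]: "f \<in> borel_measurable borel"
  shows "(\<integral>\<^sup>+ y. indicator shellA y * (\<integral>\<^sup>+ l. indicator {0<..} l * ennreal (l^2) * f (l *\<^sub>R y) \<partial>lborel) \<partial>lborel)
         = (\<integral>\<^sup>+ x. f x \<partial>lborel)"
proof -
  have p1: "pair_sigma_finite (lborel :: (real^3) measure) (lborel :: real measure)"
    by (simp add: pair_sigma_finite_def sigma_finite_lborel)
  have p2: "pair_sigma_finite (lborel :: real measure) (lborel :: (real^3) measure)"
    by (simp add: pair_sigma_finite_def sigma_finite_lborel)
  have "(\<integral>\<^sup>+ y. indicator shellA y * (\<integral>\<^sup>+ l. indicator {0<..} l * ennreal (l^2) * f (l *\<^sub>R y) \<partial>lborel) \<partial>lborel)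
      = (\<integral>\<^sup>+ y. (\<integral>\<^sup>+ l. indicator shellA y * (indicator {0<..} l * ennreal (l^2) * f (l *\<^sub>R y)) \<partial>lborel) \<partial>lborel)"
    by (intro nn_integral_cong nn_integral_cmult[symmetric]) measurable
  also have "\<dots> = (\<integral>\<^sup>+ l. (\<integral>\<^sup>+ y. indicator shellA y * (indicator {0<..} l * ennreal (l^2) * f (l *\<^sub>R y)) \<partial>lborel) \<partial>lborel)"
    by (rule pair_sigma_finite.Fubini'[OF p1, symmetric]) measurable
  also have "\<dots> = (\<integral>\<^sup>+ l. (\<integral>\<^sup>+ x. indicator {0<..} l * ennreal (1/l) * indicator shellA ((1/l) *\<^sub>R x) * f x \<partial>lborel) \<partial>lborel)"
  proof (rule nn_integral_cong)
    fix l :: real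
    show "(\<integral>\<^sup>+ y. indicator shellA y * (indicator {0<..} l * ennreal (l^2) * f (l *\<^sub>R y)) \<partial>lborel)
        = (\<integral>\<^sup>+ x. indicator {0<..} l * ennreal (1/l) * indicator shellA ((1/l) *\<^sub>R x) * f x \<partial>lborel)"
    proof (cases "0 < l")
      case False then show ?thesis by (simp add: indicator_def)
    next
      case True
      have "(\<integral>\<^sup>+ x. indicator shellA ((1/l) *\<^sub>R x) * f x \<partial>lborel)
          = ennreal (l^3) * (\<integral>\<^sup>+ y. indicator shellA ((1/l) *\<^sub>R (l *\<^sub>R y)) * f (l *\<^sub>R y) \<partial>lborel)"
        by (rule scale_nn[OF _ True]) measurable
      also have "\<dots> = ennreal (l^3) * (\<integral>\<^sup>+ y. indicator shellA y * f (l *\<^sub>R y) \<partial>lborel)"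
        using True by simp
      finally have e1: "(\<integral>\<^sup>+ x. indicator shellA ((1/l) *\<^sub>R x) * f x \<partial>lborel)
          = ennreal (l^3) * (\<integral>\<^sup>+ y. indicator shellA y * f (l *\<^sub>R y) \<partial>lborel)" .
      have "(\<integral>\<^sup>+ x. indicator {0<..} l * ennreal (1/l) * indicator shellA ((1/l) *\<^sub>R x) * f x \<partial>lborel)
          = ennreal (1/l) * (\<integral>\<^sup>+ x. indicator shellA ((1/l) *\<^sub>R x) * f x \<partial>lborel)"
        using True by (subst nn_integral_cmult[symmetric]) (auto simp: mult.assoc)
      also have "\<dots> = ennreal (1/l) * ennreal (l^3) * (\<integral>\<^sup>+ y. indicator shellA y * f (l *\<^sub>R y) \<partial>lborel)"
        by (simp add: e1 mult.assoc)
      also have "ennreal (1/l) * ennreal (l^3) = ennreal (l^2)"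
        using True by (simp add: ennreal_mult[symmetric] power3_eq_cube power2_eq_square)
      also have "ennreal (l^2) * (\<integral>\<^sup>+ y. indicator shellA y * f (l *\<^sub>R y) \<partial>lborel)
          = (\<integral>\<^sup>+ y. indicator shellA y * (indicator {0<..} l * ennreal (l^2) * f (l *\<^sub>R y)) \<partial>lborel)"
        using True by (subst nn_integral_cmult[symmetric]) (auto simp: ac_simps)
      finally show ?thesis ..
    qed
  qed
  also have "\<dots> = (\<integral>\<^sup>+ x. (\<integral>\<^sup>+ l. indicator {0<..} l * ennreal (1/l) * indicator shellA ((1/l) *\<^sub>R x) * f x \<partial>lborel) \<partial>lborel)"
    by (rule pair_sigma_finite.Fubini'[OF p1, where f="\<lambda>x l. indicator {0<..} l * ennreal (1/l) * indicator shellA ((1/l) *\<^sub>R x) * f x"]) measurable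
  also have "\<dots> = (\<integral>\<^sup>+ x. f x \<partial>lborel)"
  proof (rule nn_integral_cong_AE)
    show "AE x in lborel. (\<integral>\<^sup>+ l. indicator {0<..} l * ennreal (1/l) * indicator shellA ((1/l) *\<^sub>R x) * f x \<partial>lborel) = f x"
      using AE_lborel_singleton[of 0]
    proof eventually_elim
      case (elim x)
      have "(\<integral>\<^sup>+ l. indicator {0<..} l * ennreal (1/l) * indicator shellA ((1/l) *\<^sub>R x) * f x \<partial>lborel)
          = (\<integral>\<^sup>+ l. indicator {0<..} l * ennreal (1/l) * indicator shellA ((1/l) *\<^sub>R x) \<partial>lborel) * f x"
        by (rule nn_integral_multc) measurable
      also have "\<dots> = f x" using inner_ln[OF elim] unfolding shellA_def by simp
      finally show ?case .
    qed
  qed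
  finally show ?thesis .
qed

lemma shell_int: "(\<integral>\<^sup>+ y. indicator shellA y * ennreal (1 / (3 * norm y ^ 3)) \<partial>lborel) = ennreal (4/3 * pi)"
proof -
  have "(\<integral>\<^sup>+ y. indicator shellA y * ennreal (1 / (3 * norm y ^ 3)) \<partial>lborel)
      = (\<integral>\<^sup>+ y. indicator shellA y * (\<integral>\<^sup>+ l. indicator {0<..} l * ennreal (l^2) * indicator (ball (0::real^3) 1) (l *\<^sub>R y) \<partial>lborel) \<partial>lborel)"
  proof (rule nn_integral_cong)
    fix y :: "real^3"
    show "indicator shellA y * ennreal (1 / (3 * norm y ^ 3)) = indicator shellA y * (\<integral>\<^sup>+ l. indicator {0<..} l * ennreal (l^2) * indicator (ball (0::real^3) 1) (l *\<^sub>R y) \<partial>lborel)"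
    proof (cases "y \<in> shellA")
      case False then show ?thesis by simp
    next
      case True
      then have y0: "y \<noteq> 0" using zero_notin_shellA by auto
      define b where "b = 1 / norm y"
      have b0: "0 < b" unfolding b_def using y0 by simp
      have eq: "indicator {0<..} l * ennreal (l^2) * indicator (ball (0::real^3) 1) (l *\<^sub>R y) = ennreal (l^2) * indicator (box 0 b) l" for l :: real
      proof (cases "0 < l")
        case True
        have "(norm (l *\<^sub>R y) < 1) \<longleftrightarrow> l < b" unfolding b_def using True y0
          by (simp add: field_simps)
        then show ?thesis using True by (simp add: indicator_def mem_ball dist_norm)
      qed (simp add: indicator_def)
      have "((\<lambda>l. l^2) has_integral (b^3/3 - 0^3/3)) {0..b}"
      proof (rule fundamental_theorem_of_calculus)
        show "0 \<le> b" using b0 by simp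
        fix l assume "l \<in> {0..b}"
        show "((\<lambda>l. l^3/3) has_vector_derivative l^2) (at l within {0..b})"
          unfolding has_real_derivative_iff_has_vector_derivative[symmetric]
          by (rule derivative_eq_intros refl | simp add: power2_eq_square)+
      qed
      then have "((\<lambda>l. l^2) has_integral (b^3/3)) (box 0 b)"
        unfolding has_integral_open_interval by (simp add: cbox_interval)
      then have "(\<integral>\<^sup>+ l. ennreal (l^2) * indicator (box 0 b) l \<partial>lborel) = ennreal (b^3/3)"
        by (rule nn_integral_has_integral_lebesgue'[rotated]) simp
      also have "b^3/3 = 1 / (3 * norm y ^ 3)" unfolding b_def by (simp add: field_simps)
      finally show ?thesis by (simp add: eq)
    qed
  qed
  also have "\<dots> = (\<integral>\<^sup>+ x. indicator (ball (0::real^3) 1) x \<partial>lborel)"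
    by (rule scaling_id) (intro borel_measurable_indicator borel_open open_ball)
  also have "\<dots> = emeasure lborel (ball (0::real^3) 1)" by simp
  also have "\<dots> = ennreal (measure lborel (ball (0::real^3) 1))"
    using emeasure_lborel_ball_finite[of "0::real^3" 1] by (simp add: emeasure_eq_ennreal_measure top.not_eq_extremum)
  also have "measure lborel (ball (0::real^3) 1) = 4/3 * pi" by (simp add: sphere_volume)
  finally show ?thesis .
qed

lemma eint01: "einterval 0 1 = {0<..<1::real}"
  by (metis einterval_eq_Icc zero_ereal_def one_ereal_def)

lemma optical_path_meas:
  fixes s :: "real^3 \<Rightarrow> real" assumes [measurable]: "s \<in> borel_measurable borel"
  shows "(\<lambda>p. optical_path s (fst p) (snd p)) \<in> borel_measurable (borel \<Otimes>\<^sub>M borel)"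
proof -
  have "(\<lambda>p. \<integral>t. (\<lambda>(p, t). indicator {0<..<1} t *\<^sub>R (s (fst p + t *\<^sub>R (snd p - fst p)) * norm (snd p - fst p))) (p, t) \<partial>lborel) \<in> borel_measurable (borel \<Otimes>\<^sub>M borel)"
    by (rule lborel.borel_measurable_lebesgue_integral) measurable
  moreover have "(\<lambda>p. optical_path s (fst p) (snd p)) = (\<lambda>p. \<integral>t. (\<lambda>(p, t). indicator {0<..<1} t *\<^sub>R (s (fst p + t *\<^sub>R (snd p - fst p)) * norm (snd p - fst p))) (p, t) \<partial>lborel)"
    unfolding optical_path_def
    by (intro ext) (simp add: interval_lebesgue_integral_le_eq set_lebesgue_integral_def eint01 mult.assoc[symmetric])
  ultimately show ?thesis by simp
qed

lemma optical_path_ray: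
  fixes s :: "real^3 \<Rightarrow> real" assumes [measurable]: "s \<in> borel_measurable borel"
    and s0: "\<And>x. 0 \<le> s x" and sC: "\<And>x. s x \<le> C" and l: "0 < l"
  shows "optical_path s r (r + l *\<^sub>R y) = (LINT u:{0..l}|lborel. s (r + u *\<^sub>R y) * norm y)"
proof -
  define \<phi> where "\<phi> = (\<lambda>u. s (r + u *\<^sub>R y) * norm y)"
  have [measurable]: "\<phi> \<in> borel_measurable borel" unfolding \<phi>_def by measurable
  have C0: "0 \<le> C" using s0[of 0] sC[of 0] by linarith
  have si: "set_integrable lborel {a..b} (\<lambda>u. c * \<phi> (m * u))" for a b c m
    unfolding set_integrable_def
    by (rule integrableI_bounded_set_indicator[where B="\<bar>c\<bar> * (C * norm y)"])
       (auto simp: emeasure_lborel_Icc_eq \<phi>_def abs_mult s0 sC abs_of_nonneg intro!: mult_left_mono mult_right_mono)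
  have "optical_path s r (r + l *\<^sub>R y) = (LBINT t=0..1. l * \<phi> (l * t))"
    unfolding optical_path_def \<phi>_def using l by (simp add: algebra_simps)
  also have "\<dots> = integral {0..1} (\<lambda>t. l * \<phi> (l * t))"
  proof -
    have "(LBINT t=ereal 0..ereal 1. l * \<phi> (l * t)) = integral {0..1} (\<lambda>t. l * \<phi> (l * t))"
      by (rule interval_integral_eq_integral) (simp_all add: si)
    then show ?thesis by (simp add: zero_ereal_def one_ereal_def)
  qed
  also have "\<dots> = l * integral ((\<lambda>x. x / l) ` {0..l}) (\<lambda>t. \<phi> (l * t))"
    using l by simp
  also have "\<dots> = integral {0..l} \<phi>"
    using l by (subst integral_stretch_real) simp_all
  also have "\<dots> = (LINT u:{0..l}|lborel. \<phi> u)"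
    using set_borel_integral_eq_integral(2)[OF si[of 0 l 1 1]] by simp
  finally show ?thesis unfolding \<phi>_def .
qed

lemma kern_meas:
  fixes s :: "real^3 \<Rightarrow> real" assumes sm[measurable]: "s \<in> borel_measurable borel"
  shows "(\<lambda>p. kern s (fst p) (snd p)) \<in> borel_measurable (borel \<Otimes>\<^sub>M borel)"
proof -
  have [measurable]: "(\<lambda>p. optical_path s (fst p) (snd p)) \<in> borel_measurable (borel \<Otimes>\<^sub>M borel)"
    by (rule optical_path_meas[OF sm])
  show ?thesis unfolding kern_def by measurable
qed

lemma kern_meas1:
  fixes s :: "real^3 \<Rightarrow> real" assumes sm[measurable]: "s \<in> borel_measurable borel"
  shows "(\<lambda>x. kern s r x) \<in> borel_measurable borel"
proof -
  have "(\<lambda>x. (\<lambda>p. kern s (fst p) (snd p)) (r, x)) \<in> borel_measurable borel"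
    by (rule measurable_compose[OF _ kern_meas[OF sm]]) measurable
  then show ?thesis by simp
qed

lemma row:
  fixes s :: "real^3 \<Rightarrow> real"
  assumes sm[measurable]: "s \<in> borel_measurable borel" and s0: "\<And>x. 0 \<le> s x" and sC: "\<And>x. s x \<le> C"
  shows "(\<integral>\<^sup>+ x. ennreal (kern s r x * s x) \<partial>lborel) \<le> 1"
proof -
  have km[measurable]: "(\<lambda>x. kern s r x) \<in> borel_measurable borel" by (rule kern_meas1[OF sm])
  define f where "f = (\<lambda>y. ennreal (kern s r (r + y) * s (r + y)))"
  have fm[measurable]: "f \<in> borel_measurable borel" unfolding f_def by measurable
  have "(\<integral>\<^sup>+ x. ennreal (kern s r x * s x) \<partial>lborel) = (\<integral>\<^sup>+ x. ennreal (kern s r x * s x) \<partial>distr lborel borel ((+) r))"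
    by (simp add: lborel_distr_plus)
  also have "\<dots> = (\<integral>\<^sup>+ y. f y \<partial>lborel)"
    unfolding f_def by (subst nn_integral_distr) simp_all
  also have "\<dots> = (\<integral>\<^sup>+ y. indicator shellA y * (\<integral>\<^sup>+ l. indicator {0<..} l * ennreal (l^2) * f (l *\<^sub>R y) \<partial>lborel) \<partial>lborel)"
    by (rule scaling_id[symmetric]) simp
  also have "\<dots> \<le> (\<integral>\<^sup>+ y. indicator shellA y * ennreal (1 / (4 * pi * norm y ^ 3)) \<partial>lborel)"
  proof (rule nn_integral_mono)
    fix y :: "real^3"
    show "indicator shellA y * (\<integral>\<^sup>+ l. indicator {0<..} l * ennreal (l^2) * f (l *\<^sub>R y) \<partial>lborel)
        \<le> indicator shellA y * ennreal (1 / (4 * pi * norm y ^ 3))"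
    proof (cases "y \<in> shellA")
      case False then show ?thesis by simp
    next
      case True
      then have y0: "y \<noteq> 0" using zero_notin_shellA by auto
      define n where "n = norm y"
      have n0: "0 < n" unfolding n_def using y0 by simp
      define g where "g = (\<lambda>l. s (r + l *\<^sub>R y) * n)"
      have gm[measurable]: "g \<in> borel_measurable borel" unfolding g_def by measurable
      have pt: "indicator {0<..} l * ennreal (l^2) * f (l *\<^sub>R y)
          = ennreal (1 / (4 * pi * n ^ 3)) * (indicator {0<..} l * ennreal (g l * exp (- (LINT u:{0..l}|lborel. g u))))" for l :: real
      proof (cases "0 < l")
        case False then show ?thesis by (simp add: indicator_def)
      next
        case True
        have op: "optical_path s r (r + l *\<^sub>R y) = (LINT u:{0..l}|lborel. g u)"
          unfolding g_def n_def by (rule optical_path_ray[OF sm s0 sC True])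
        define E where "E = exp (- (LINT u:{0..l}|lborel. g u))"
        have nrm: "norm (r - (r + l *\<^sub>R y)) = l * n" unfolding n_def using True by simp
        have "l^2 * (kern s r (r + l *\<^sub>R y) * s (r + l *\<^sub>R y)) = 1 / (4 * pi * n ^ 3) * (g l * E)"
          unfolding kern_def op nrm E_def using True n0 unfolding g_def
          by (simp add: field_simps power2_eq_square power3_eq_cube)
        then have e1: "ennreal (l^2) * f (l *\<^sub>R y) = ennreal (1 / (4 * pi * n ^ 3) * (g l * E))"
          unfolding f_def using True by (simp add: ennreal_mult[symmetric] s0 kern_def)
        have g0: "0 \<le> g l" unfolding g_def using n0 s0 by simp
        have "ennreal (1 / (4 * pi * n ^ 3) * (g l * E)) = ennreal (1 / (4 * pi * n ^ 3)) * ennreal (g l * E)"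
          by (rule ennreal_mult) (use n0 g0 in \<open>auto simp: E_def\<close>)
        then show ?thesis using True e1 unfolding E_def by (simp add: mult.assoc)
      qed
      have "(\<integral>\<^sup>+ l. indicator {0<..} l * ennreal (l^2) * f (l *\<^sub>R y) \<partial>lborel)
          = ennreal (1 / (4 * pi * n ^ 3)) * (\<integral>\<^sup>+ l. indicator {0<..} l * ennreal (g l * exp (- (LINT u:{0..l}|lborel. g u))) \<partial>lborel)"
        unfolding pt
      proof (rule nn_integral_cmult)
        have [measurable]: "(\<lambda>l. LINT u:{0..l}|lborel. g u) \<in> borel_measurable borel"
        proof -
          have "(\<lambda>x. \<integral>u. (\<lambda>p. if 0 \<le> snd p \<and> snd p \<le> fst p then g (snd p) else 0) (x, u) \<partial>lborel) \<in> borel_measurable borel"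
            by (rule lborel.borel_measurable_lebesgue_integral) measurable
          moreover have "(\<lambda>l. LINT u:{0..l}|lborel. g u) = (\<lambda>x. \<integral>u. (\<lambda>p. if 0 \<le> snd p \<and> snd p \<le> fst p then g (snd p) else 0) (x, u) \<partial>lborel)"
            unfolding set_lebesgue_integral_def
            by (intro ext Bochner_Integration.integral_cong) (auto simp: indicator_def)
          ultimately show ?thesis by simp
        qed
        show "(\<lambda>l. indicator {0<..} l * ennreal (g l * exp (- (LINT u:{0..l}|lborel. g u)))) \<in> borel_measurable lborel"
          by measurable
      qed
      also have "\<dots> \<le> ennreal (1 / (4 * pi * n ^ 3)) * 1"
        by (intro mult_left_mono oneD[OF gm, where M="C * n"]) (auto simp: g_def s0 sC n0 less_imp_le intro!: mult_right_mono mult_nonneg_nonneg)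
      finally show ?thesis using True unfolding n_def by simp
    qed
  qed
  also have "\<dots> = (\<integral>\<^sup>+ y. ennreal (3 / (4 * pi)) * (indicator shellA y * ennreal (1 / (3 * norm y ^ 3))) \<partial>lborel)"
    by (intro nn_integral_cong) (simp add: ennreal_mult[symmetric] field_simps)
  also have "\<dots> = ennreal (3 / (4 * pi)) * ennreal (4/3 * pi)"
    by (subst nn_integral_cmult) (simp_all add: shell_int)
  also have "\<dots> = 1" by (simp add: ennreal_mult[symmetric])
  finally show ?thesis .
qed

lemma op_integral:
  "optical_path s r r' = (\<integral>t. indicator {0<..<1} t * (s (r + t *\<^sub>R (r' - r)) * norm (r' - r)) \<partial>lborel)"
  unfolding optical_path_def
  by (simp add: interval_lebesgue_integral_le_eq set_lebesgue_integral_def eint01 mult.assoc[symmetric])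

lemma op_sym: "optical_path s r r' = optical_path s r' r"
proof -
  have "optical_path s r r' = (\<integral>t. indicator {0<..<1} t * (s (r + t *\<^sub>R (r' - r)) * norm (r' - r)) \<partial>lborel)"
    by (rule op_integral)
  also have "\<dots> = \<bar>-1\<bar> *\<^sub>R (\<integral>t. indicator {0<..<1} (1 + -1 * t) * (s (r + (1 + -1 * t) *\<^sub>R (r' - r)) * norm (r' - r)) \<partial>lborel)"
    by (rule lborel_integral_real_affine) simp
  also have "\<dots> = (\<integral>t. indicator {0<..<1} t * (s (r' + t *\<^sub>R (r - r')) * norm (r - r')) \<partial>lborel)"
  proof -
    have "indicator {0<..<1} (1 + -1 * t) * (s (r + (1 + -1 * t) *\<^sub>R (r' - r)) * norm (r' - r))
        = indicator {0<..<1} t * (s (r' + t *\<^sub>R (r - r')) * norm (r - r'))" for t :: real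
    proof -
      have "r + (1 + -1 * t) *\<^sub>R (r' - r) = r' + t *\<^sub>R (r - r')" by (simp add: algebra_simps)
      moreover have "norm (r' - r) = norm (r - r')" by (rule norm_minus_commute)
      moreover have "indicator {0<..<1::real} (1 + -1 * t) = (indicator {0<..<1} t :: real)"
        by (auto simp: indicator_def)
      ultimately show ?thesis by simp
    qed
    then show ?thesis by simp
  qed
  also have "\<dots> = optical_path s r' r" by (rule op_integral[symmetric])
  finally show ?thesis .
qed

lemma kern_sym: "kern s r r' = kern s r' r"
  unfolding kern_def by (simp add: op_sym[of s r r'] norm_minus_commute)

lemma op_cong:
  assumes "\<And>t. 0 < t \<Longrightarrow> t < 1 \<Longrightarrow> s (r + t *\<^sub>R (r' - r)) = s' (r + t *\<^sub>R (r' - r))"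
  shows "optical_path s r r' = optical_path s' r r'"
  unfolding op_integral
  by (intro Bochner_Integration.integral_cong refl) (auto simp: indicator_def assms)

lemma kern_cong_convex:
  assumes "convex V" "r \<in> V" "r' \<in> V" "\<And>x. x \<in> V \<Longrightarrow> s x = s' x"
  shows "kern s r r' = kern s' r r'"
proof -
  have "r + t *\<^sub>R (r' - r) \<in> V" if "0 < t" "t < 1" for t :: real
  proof -
    have "(1 - t) *\<^sub>R r + t *\<^sub>R r' \<in> V"
      using assms(1-3) that by (intro convexD) auto
    moreover have "(1 - t) *\<^sub>R r + t *\<^sub>R r' = r + t *\<^sub>R (r' - r)" by (simp add: algebra_simps)
    ultimately show ?thesis by simp
  qed
  then have "optical_path s r r' = optical_path s' r r'" by (intro op_cong) (auto simp: assms(4))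
  then show ?thesis unfolding kern_def by simp
qed

lemma kern_nonneg: "0 \<le> kern s r r'" unfolding kern_def by simp

lemma cs_point:
  fixes k s0 a :: real
  assumes k0: "0 \<le> k" and s0: "0 \<le> s0" and z: "s0 = 0 \<Longrightarrow> a = 0"
  shows "ennreal (sqrt (k * s0)) * ennreal (sqrt (k * (a^2 / s0))) = ennreal \<bar>k * a\<bar>"
proof (cases "s0 = 0")
  case True then show ?thesis using z by simp
next
  case False
  then have sp: "0 < s0" using s0 by simp
  have "ennreal (sqrt (k * s0)) * ennreal (sqrt (k * (a^2 / s0))) = ennreal (sqrt (k * s0) * sqrt (k * (a^2 / s0)))"
    by (rule ennreal_mult[symmetric]) (simp_all add: k0 s0)
  also have "sqrt (k * s0) * sqrt (k * (a^2 / s0)) = sqrt ((k * a)^2)"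
    using sp by (simp add: real_sqrt_mult[symmetric] field_simps power2_eq_square)
  also have "\<dots> = \<bar>k * a\<bar>" by simp
  finally show ?thesis .
qed

lemma sq_ennreal_sqrt: "0 \<le> x \<Longrightarrow> (ennreal (sqrt x))^2 = ennreal x"
  by (simp add: ennreal_power)

theorem theorem1:
  fixes V :: "(real^3) set"
    and \<sigma>S \<sigma>A \<sigma>star :: "real^3 \<Rightarrow> real"
    and sSmin sSmax sAmin sAmax sstmin sstmax :: real
  assumes V_open: "open V" and V_bounded: "bounded V" and V_convex: "convex V" and V_ne: "V \<noteq> {}"
    and \<sigma>S_meas: "set_borel_measurable borel V \<sigma>S"
    and \<sigma>A_meas: "set_borel_measurable borel V \<sigma>A"
    and \<sigma>star_meas: "set_borel_measurable borel V \<sigma>star"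
    and sS_pos: "0 < sSmin" and \<sigma>S_bnd: "\<forall>r\<in>V. sSmin \<le> \<sigma>S r \<and> \<sigma>S r \<le> sSmax"
    and sA_pos: "0 < sAmin" and \<sigma>A_bnd: "\<forall>r\<in>V. sAmin \<le> \<sigma>A r \<and> \<sigma>A r \<le> sAmax"
    and sst_pos: "0 < sstmin" and \<sigma>star_bnd: "\<forall>r\<in>V. sstmin \<le> \<sigma>star r \<and> \<sigma>star r \<le> sstmax"
  shows "\<forall>v. set_borel_measurable lebesgue V v \<longrightarrow>
           L2w_sq V (\<lambda>r. \<sigma>S r + \<sigma>A r) v < \<infinity> \<longrightarrow>
           L2w_sq V (\<lambda>r. \<sigma>S r + \<sigma>A r) (Kop (\<lambda>r. \<sigma>S r + \<sigma>A r) V (\<lambda>r. \<sigma>star r * v r))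
             \<le> (e2ennreal (Linf_norm V (\<lambda>r. \<sigma>star r / (\<sigma>S r + \<sigma>A r))))\<^sup>2
                * L2w_sq V (\<lambda>r. \<sigma>S r + \<sigma>A r) v"
proof (intro allI impI)
  fix v :: "real^3 \<Rightarrow> real"
  assume vm: "set_borel_measurable lebesgue V v"
  define s where "s = (\<lambda>r. \<sigma>S r + \<sigma>A r)"
  define s0 where "s0 = (\<lambda>r. indicator V r * s r)"
  define st0 where "st0 = (\<lambda>r. indicator V r * \<sigma>star r)"
  define M where "M = e2ennreal (Linf_norm V (\<lambda>r. \<sigma>star r / (\<sigma>S r + \<sigma>A r)))"
  have Vb[measurable]: "V \<in> sets borel" using V_open by simp
  have s0m[measurable]: "s0 \<in> borel_measurable borel"
  proof -
    have "(\<lambda>x. indicator V x *\<^sub>R \<sigma>S x + indicator V x *\<^sub>R \<sigma>A x) \<in> borel_measurable borel"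
      using \<sigma>S_meas \<sigma>A_meas unfolding set_borel_measurable_def by measurable
    moreover have "(\<lambda>x. indicator V x *\<^sub>R \<sigma>S x + indicator V x *\<^sub>R \<sigma>A x) = s0"
      unfolding s0_def s_def by (auto simp: distrib_left)
    ultimately show ?thesis by simp
  qed
  have st0m[measurable]: "st0 \<in> borel_measurable borel"
    using \<sigma>star_meas unfolding set_borel_measurable_def st0_def by simp
  obtain p where pV: "p \<in> V" using V_ne by auto
  define C where "C = sSmax + sAmax"
  have bS: "sSmin \<le> \<sigma>S x" "\<sigma>S x \<le> sSmax" if "x \<in> V" for x using \<sigma>S_bnd that by auto
  have bA: "sAmin \<le> \<sigma>A x" "\<sigma>A x \<le> sAmax" if "x \<in> V" for x using \<sigma>A_bnd that by auto
  have s0_pos: "0 < s0 x" if "x \<in> V" for x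
    using bS[OF that] bA[OF that] sS_pos sA_pos that unfolding s0_def s_def by simp
  have s0_nn: "0 \<le> s0 x" for x
    using s0_pos[of x] unfolding s0_def by (cases "x \<in> V") auto
  have s0_C: "s0 x \<le> C" for x
  proof (cases "x \<in> V")
    case True then show ?thesis using bS[OF True] bA[OF True] unfolding s0_def s_def C_def by simp
  next
    case False then show ?thesis using bS[OF pV] bA[OF pV] sS_pos sA_pos unfolding s0_def s_def C_def by simp
  qed
  have s0_V: "s0 x = s x" if "x \<in> V" for x using that unfolding s0_def by simp
  have kV: "kern s r r' = kern s0 r r'" if "r \<in> V" "r' \<in> V" for r r'
    by (rule kern_cong_convex[OF V_convex that]) (simp add: s0_V)
  have km[measurable]: "(\<lambda>p. kern s0 (fst p) (snd p)) \<in> borel_measurable (lborel \<Otimes>\<^sub>M lborel)"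
  proof -
    have "sets ((lborel::(real^3) measure) \<Otimes>\<^sub>M (lborel::(real^3) measure)) = sets (borel \<Otimes>\<^sub>M borel)"
      by (intro sets_pair_measure_cong) simp_all
    then have "measurable ((lborel::(real^3) measure) \<Otimes>\<^sub>M (lborel::(real^3) measure)) (borel::real measure) = measurable (borel \<Otimes>\<^sub>M borel) borel"
      by (rule measurable_cong_sets) simp
    then show ?thesis using kern_meas[OF s0m] by simp
  qed
  have km1[measurable]: "(\<lambda>x. kern s0 r x) \<in> borel_measurable borel" for r
    by (rule kern_meas1[OF s0m])
  have km2[measurable]: "(\<lambda>x. kern s0 x r) \<in> borel_measurable borel" for r
  proof -
    have "(\<lambda>x. kern s0 x r) = (\<lambda>x. kern s0 r x)" by (rule ext) (rule kern_sym)
    then show ?thesis using kern_meas1[OF s0m, of r] by simp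
  qed
  have row1: "(\<integral>\<^sup>+ x. ennreal (kern s0 r x * s0 x) \<partial>lborel) \<le> 1" for r
    by (rule row[OF s0m s0_nn s0_C])
  have "(\<lambda>x. indicator V x * v x) \<in> borel_measurable (completion lborel)"
    using vm unfolding set_borel_measurable_def by simp
  from completion_ex_borel_measurable_real[OF this]
  obtain v' where v'm[measurable]: "v' \<in> borel_measurable lborel" and AEv: "AE x in lborel. indicator V x * v x = v' x"
    by blast
  define vb where "vb = (\<lambda>x. indicator V x * v' x)"
  have vbm[measurable]: "vb \<in> borel_measurable borel" unfolding vb_def using v'm by simp
  have AEvb: "AE x in lborel. x \<in> V \<longrightarrow> v x = vb x"
    using AEv by eventually_elim (auto simp: vb_def)
  have vb_out: "x \<notin> V \<Longrightarrow> vb x = 0" for x unfolding vb_def by simp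
  have st0_out: "x \<notin> V \<Longrightarrow> st0 x = 0" for x unfolding st0_def by simp
  have L2v: "L2w_sq V s v = (\<integral>\<^sup>+ r. ennreal (vb r ^ 2 * s0 r) \<partial>lborel)"
  proof -
    have "L2w_sq V s v = (\<integral>\<^sup>+ r. ennreal (vb r ^ 2 * s0 r) \<partial>lebesgue)"
      unfolding L2w_sq_def
    proof (rule nn_integral_cong_AE)
      show "AE x in lebesgue. indicator V x * ennreal ((v x)\<^sup>2 * s x) = ennreal (vb x ^ 2 * s0 x)"
        using AE_completion[OF AEvb] by eventually_elim (auto simp: vb_out s0_def indicator_def)
    qed
    then show ?thesis by (simp add: nn_integral_completion)
  qed
  define w where "w = (\<lambda>r'. (st0 r' * vb r')^2 / s0 r')"
  have wm[measurable]: "w \<in> borel_measurable borel" unfolding w_def by measurable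
  have w_nn: "0 \<le> w x" for x unfolding w_def using s0_nn[of x] by simp
  define B where "B = (\<lambda>r. \<integral>\<^sup>+ r'. ennreal (kern s0 r r' * w r') \<partial>lborel)"
  have pw: "ennreal ((Kop s V (\<lambda>r. \<sigma>star r * v r) r)^2) \<le> B r" if rV: "r \<in> V" for r
  proof -
    define F where "F = (\<lambda>r'. kern s0 r r' * (st0 r' * vb r'))"
    have Fm[measurable]: "F \<in> borel_measurable borel" unfolding F_def by measurable
    have K: "Kop s V (\<lambda>r. \<sigma>star r * v r) r = (\<integral>r'. F r' \<partial>lebesgue)"
    proof -
      have "Kop s V (\<lambda>r. \<sigma>star r * v r) r = (\<integral>r'. kern s0 r r' * (st0 r' * (indicator V r' * v r')) \<partial>lebesgue)"
        unfolding Kop_def set_lebesgue_integral_def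
        by (intro Bochner_Integration.integral_cong refl) (auto simp: indicator_def kV[OF rV] st0_def)
      also have "\<dots> = (\<integral>r'. F r' \<partial>lebesgue)"
      proof (rule integral_cong_AE)
        have c: "(\<lambda>x. indicator V x * v x) \<in> borel_measurable lebesgue"
          using vm unfolding set_borel_measurable_def by simp
        have a: "(\<lambda>r'. kern s0 r r') \<in> borel_measurable lebesgue"
          by (rule measurable_completion) (simp add: km1)
        have b: "st0 \<in> borel_measurable lebesgue"
          by (rule measurable_completion) simp
        show "(\<lambda>r'. kern s0 r r' * (st0 r' * (indicator V r' * v r'))) \<in> borel_measurable lebesgue"
          by (intro borel_measurable_times a b c)
        show "F \<in> borel_measurable lebesgue"
          by (rule measurable_completion) simp
        show "AE x in lebesgue. kern s0 r x * (st0 x * (indicator V x * v x)) = F x"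
          using AE_completion[OF AEvb] by eventually_elim (auto simp: F_def st0_def vb_out indicator_def)
      qed
      finally show ?thesis .
    qed
    have absK: "ennreal \<bar>\<integral>r'. F r' \<partial>lebesgue\<bar> \<le> (\<integral>\<^sup>+ r'. ennreal \<bar>F r'\<bar> \<partial>lborel)"
    proof (cases "integrable lebesgue F")
      case True
      from integral_norm_bound_ennreal[OF True]
      show ?thesis by (simp add: nn_integral_completion)
    next
      case False
      then show ?thesis by (simp add: not_integrable_integral_eq)
    qed
    have cs: "(\<integral>\<^sup>+ r'. ennreal \<bar>F r'\<bar> \<partial>lborel)^2
        \<le> (\<integral>\<^sup>+ r'. (ennreal (sqrt (kern s0 r r' * s0 r')))^2 \<partial>lborel) * (\<integral>\<^sup>+ r'. (ennreal (sqrt (kern s0 r r' * w r')))^2 \<partial>lborel)"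
    proof -
      have "(\<integral>\<^sup>+ r'. ennreal \<bar>F r'\<bar> \<partial>lborel) = (\<integral>\<^sup>+ r'. ennreal (sqrt (kern s0 r r' * s0 r')) * ennreal (sqrt (kern s0 r r' * w r')) \<partial>lborel)"
        unfolding F_def w_def
        by (intro nn_integral_cong cs_point[symmetric] kern_nonneg s0_nn)
           (use s0_pos st0_out in \<open>force\<close>)
      also have "(\<dots>)^2 \<le> (\<integral>\<^sup>+ r'. (ennreal (sqrt (kern s0 r r' * s0 r')))^2 \<partial>lborel) * (\<integral>\<^sup>+ r'. (ennreal (sqrt (kern s0 r r' * w r')))^2 \<partial>lborel)"
        by (rule Cauchy_Schwarz_nn_integral) measurable
      finally show ?thesis by simp
    qed
    have "ennreal ((Kop s V (\<lambda>r. \<sigma>star r * v r) r)^2) = (ennreal \<bar>\<integral>r'. F r' \<partial>lebesgue\<bar>)^2"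
      unfolding K by (simp add: ennreal_power)
    also have "\<dots> \<le> (\<integral>\<^sup>+ r'. ennreal \<bar>F r'\<bar> \<partial>lborel)^2"
      by (rule power_mono[OF absK]) simp
    also have "\<dots> \<le> (\<integral>\<^sup>+ r'. ennreal (kern s0 r r' * s0 r') \<partial>lborel) * B r"
      using cs unfolding B_def
      by (simp add: sq_ennreal_sqrt kern_nonneg s0_nn w_nn)
    also have "\<dots> \<le> 1 * B r" by (rule mult_right_mono[OF row1]) simp
    finally show ?thesis by simp
  qed
  have AEM: "AE x in lborel. x \<in> V \<longrightarrow> ennreal ((\<sigma>star x / s x)^2) \<le> M^2"
  proof -
    have "AE x in restrict_space lebesgue V. ereal \<bar>\<sigma>star x / s x\<bar> \<le> Linf_norm V (\<lambda>r. \<sigma>star r / (\<sigma>S r + \<sigma>A r))"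
      unfolding Linf_norm_def s_def by (rule esssup_AE)
    then have "AE x in lebesgue. x \<in> V \<longrightarrow> ereal \<bar>\<sigma>star x / s x\<bar> \<le> Linf_norm V (\<lambda>r. \<sigma>star r / (\<sigma>S r + \<sigma>A r))"
      by (subst (asm) AE_restrict_space_iff) simp_all
    then have "AE x in lborel. x \<in> V \<longrightarrow> ereal \<bar>\<sigma>star x / s x\<bar> \<le> Linf_norm V (\<lambda>r. \<sigma>star r / (\<sigma>S r + \<sigma>A r))"
      by (simp add: AE_completion_iff)
    then show ?thesis
    proof eventually_elim
      case (elim x)
      show ?case
      proof
        assume "x \<in> V"
        with elim have le: "ereal \<bar>\<sigma>star x / s x\<bar> \<le> Linf_norm V (\<lambda>r. \<sigma>star r / (\<sigma>S r + \<sigma>A r))" by blast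
        have "e2ennreal (ereal \<bar>\<sigma>star x / s x\<bar>) \<le> M" unfolding M_def by (rule e2ennreal_mono[OF le])
        then have "ennreal \<bar>\<sigma>star x / s x\<bar> \<le> M" by simp
        then have "(ennreal \<bar>\<sigma>star x / s x\<bar>)^2 \<le> M^2" by (rule power_mono) simp
        moreover have "(ennreal \<bar>\<sigma>star x / s x\<bar>)^2 = ennreal ((\<sigma>star x / s x)^2)"
          by (simp add: ennreal_power power_divide)
        ultimately show "ennreal ((\<sigma>star x / s x)^2) \<le> M^2" by simp
      qed
    qed
  qed
  have "L2w_sq V s (Kop s V (\<lambda>r. \<sigma>star r * v r)) \<le> (\<integral>\<^sup>+ r. ennreal (s0 r) * B r \<partial>lebesgue)"
    unfolding L2w_sq_def
  proof (rule nn_integral_mono)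
    fix r :: "real^3"
    show "indicator V r * ennreal ((Kop s V (\<lambda>r. \<sigma>star r * v r) r)\<^sup>2 * s r) \<le> ennreal (s0 r) * B r"
    proof (cases "r \<in> V")
      case False then show ?thesis by simp
    next
      case True
      have "ennreal ((Kop s V (\<lambda>r. \<sigma>star r * v r) r)\<^sup>2 * s r) = ennreal ((Kop s V (\<lambda>r. \<sigma>star r * v r) r)\<^sup>2) * ennreal (s0 r)"
        using s0_V[OF True] s0_nn[of r] by (simp add: ennreal_mult)
      also have "\<dots> \<le> B r * ennreal (s0 r)" by (rule mult_right_mono[OF pw[OF True]]) simp
      finally show ?thesis using True by (simp add: mult.commute)
    qed
  qed
  also have "\<dots> = (\<integral>\<^sup>+ r. ennreal (s0 r) * B r \<partial>lborel)" by (simp add: nn_integral_completion)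
  also have "\<dots> = (\<integral>\<^sup>+ r. (\<integral>\<^sup>+ r'. ennreal (s0 r) * ennreal (kern s0 r r' * w r') \<partial>lborel) \<partial>lborel)"
    unfolding B_def by (intro nn_integral_cong nn_integral_cmult[symmetric]) measurable
  also have "\<dots> = (\<integral>\<^sup>+ r'. (\<integral>\<^sup>+ r. ennreal (s0 r) * ennreal (kern s0 r r' * w r') \<partial>lborel) \<partial>lborel)"
    by (rule lborel_pair.Fubini'[symmetric]) measurable
  also have "\<dots> = (\<integral>\<^sup>+ r'. ennreal (w r') * (\<integral>\<^sup>+ r. ennreal (kern s0 r' r * s0 r) \<partial>lborel) \<partial>lborel)"
  proof (intro nn_integral_cong)
    fix r' :: "real^3"
    have "(\<integral>\<^sup>+ r. ennreal (s0 r) * ennreal (kern s0 r r' * w r') \<partial>lborel) = (\<integral>\<^sup>+ r. ennreal (w r') * ennreal (kern s0 r' r * s0 r) \<partial>lborel)"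
      by (intro nn_integral_cong)
         (simp add: ennreal_mult[symmetric] s0_nn w_nn kern_nonneg kern_sym[of s0 _ r'] mult_ac)
    also have "\<dots> = ennreal (w r') * (\<integral>\<^sup>+ r. ennreal (kern s0 r' r * s0 r) \<partial>lborel)"
      by (rule nn_integral_cmult) measurable
    finally show "(\<integral>\<^sup>+ r. ennreal (s0 r) * ennreal (kern s0 r r' * w r') \<partial>lborel) = ennreal (w r') * (\<integral>\<^sup>+ r. ennreal (kern s0 r' r * s0 r) \<partial>lborel)" .
  qed
  also have "\<dots> \<le> (\<integral>\<^sup>+ r'. ennreal (w r') * 1 \<partial>lborel)"
    by (intro nn_integral_mono mult_left_mono row1) simp
  also have "\<dots> \<le> (\<integral>\<^sup>+ r'. M^2 * ennreal (vb r' ^ 2 * s0 r') \<partial>lborel)"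
  proof (rule nn_integral_mono_AE)
    show "AE x in lborel. ennreal (w x) * 1 \<le> M^2 * ennreal (vb x ^ 2 * s0 x)"
      using AEM
    proof eventually_elim
      case (elim x)
      show ?case
      proof (cases "x \<in> V")
        case False then show ?thesis by (simp add: w_def st0_out)
      next
        case True
        have sp: "0 < s x" using s0_pos[OF True] s0_V[OF True] by simp
        have "w x = (vb x ^ 2 * s0 x) * ((\<sigma>star x / s x)^2)"
          unfolding w_def st0_def s0_V[OF True] using True sp by (simp add: field_simps power2_eq_square)
        then have "ennreal (w x) = ennreal (vb x ^ 2 * s0 x) * ennreal ((\<sigma>star x / s x)^2)"
          using s0_nn[of x] by (simp add: ennreal_mult)
        also have "\<dots> \<le> ennreal (vb x ^ 2 * s0 x) * M^2"
          by (rule mult_left_mono) (use elim True in simp_all)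
        finally show ?thesis by (simp add: mult.commute)
      qed
    qed
  qed
  also have "\<dots> = M^2 * L2w_sq V s v"
    unfolding L2v by (rule nn_integral_cmult) measurable
  finally show "L2w_sq V (\<lambda>r. \<sigma>S r + \<sigma>A r) (Kop (\<lambda>r. \<sigma>S r + \<sigma>A r) V (\<lambda>r. \<sigma>star r * v r))
             \<le> (e2ennreal (Linf_norm V (\<lambda>r. \<sigma>star r / (\<sigma>S r + \<sigma>A r))))\<^sup>2
                * L2w_sq V (\<lambda>r. \<sigma>S r + \<sigma>A r) v"
    unfolding M_def s_def .
qed

end
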